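(* Let $X$ be a separable completely metrizable space and $T:X\to X$ continuous. Then $T$ is quasi-rigid if and only if $T$ is topologically quasi-rigid.
   Context: $T$ is quasi-rigid with respect to a strictly increasing sequence $(n_k)_{k\in\mathbb{N}}$ of positive integers if there is a dense subset $Y\subset X$ such that $T^{n_k}x\to x$ as $k\to\infty$ for every $x\in Y$; $T$ is quasi-rigid if this holds for some such sequence. $T$ is topologically quasi-rigid with respect to $(n_k)$ if for every non-empty open $U\subset X$ there is $k_U$ with $T^{n_k}(U)\cap U\neq\varnothing$ for all $k\geq k_U$; topologically quasi-rigid means this holds for some such sequence. *)

theory Defs
  imports "HOL-Analysis.Analysis"
begin

definition quasi_rigid_wrt :: "'a topology \<Rightarrow> ('a \<Rightarrow> 'a) \<Rightarrow> (nat \<Rightarrow> nat) \<Rightarrow> bool" where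
  "quasi_rigid_wrt X T n \<longleftrightarrow>
     (\<exists>Y. Y \<subseteq> topspace X \<and> X closure_of Y = topspace X \<and>
          (\<forall>x\<in>Y. limitin X (\<lambda>k. (T ^^ n k) x) x sequentially))"

definition quasi_rigid :: "'a topology \<Rightarrow> ('a \<Rightarrow> 'a) \<Rightarrow> bool" where
  "quasi_rigid X T \<longleftrightarrow>
     (\<exists>n. strict_mono n \<and> (\<forall>k. 0 < n k) \<and> quasi_rigid_wrt X T n)"

definition top_quasi_rigid_wrt :: "'a topology \<Rightarrow> ('a \<Rightarrow> 'a) \<Rightarrow> (nat \<Rightarrow> nat) \<Rightarrow> bool" where
  "top_quasi_rigid_wrt X T n \<longleftrightarrow>
     (\<forall>U. openin X U \<and> U \<noteq> {} \<longrightarrow>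
          (\<exists>kU. \<forall>k\<ge>kU. (T ^^ n k) ` U \<inter> U \<noteq> {}))"

definition top_quasi_rigid :: "'a topology \<Rightarrow> ('a \<Rightarrow> 'a) \<Rightarrow> bool" where
  "top_quasi_rigid X T \<longleftrightarrow>
     (\<exists>n. strict_mono n \<and> (\<forall>k. 0 < n k) \<and> top_quasi_rigid_wrt X T n)"

end

theory Submission
  imports Defs
begin

lemma continuous_map_funpow:
  assumes "continuous_map X X T" shows "continuous_map X X (T ^^ m)"
proof (induction m)
  case 0 then show ?case by (simp add: id_def[symmetric])
next
  case (Suc m)
  have "continuous_map X X (T \<circ> (T ^^ m))" using continuous_map_compose[OF Suc assms] .
  then show ?case by (simp only: funpow.simps(2))
qed

lemma qr_imp_tqr:
  assumes "quasi_rigid_wrt X T n" shows "top_quasi_rigid_wrt X T n"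
  unfolding top_quasi_rigid_wrt_def
proof (intro allI impI)
  fix U assume U: "openin X U \<and> U \<noteq> {}"
  obtain Y where Y: "Y \<subseteq> topspace X" "X closure_of Y = topspace X"
    "\<forall>x\<in>Y. limitin X (\<lambda>k. (T ^^ n k) x) x sequentially"
    using assms unfolding quasi_rigid_wrt_def by blast
  obtain x where x: "x \<in> Y" "x \<in> U" using Y(2) U unfolding dense_intersects_open by blast
  then obtain N where N: "\<forall>k. N \<le> k \<longrightarrow> (T ^^ n k) x \<in> U"
    using Y(3) U unfolding limitin_sequentially by blast
  show "\<exists>kU. \<forall>k\<ge>kU. (T ^^ n k) ` U \<inter> U \<noteq> {}"
    using N x by blast
qed

lemma tqr_finite:
  fixes K N :: nat
  assumes "top_quasi_rigid_wrt X T n" "\<And>j. j < K \<Longrightarrow> openin X (V j) \<and> V j \<noteq> {}"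
  shows "\<exists>i\<ge>N. \<forall>j<K. (T ^^ n i) ` V j \<inter> V j \<noteq> {}"
proof -
  have "\<forall>j. \<exists>a. j < K \<longrightarrow> (\<forall>k\<ge>a. (T ^^ n k) ` V j \<inter> V j \<noteq> {})"
    using assms unfolding top_quasi_rigid_wrt_def by metis
  then obtain f where f: "\<And>j k. j < K \<Longrightarrow> k \<ge> f j \<Longrightarrow> (T ^^ n k) ` V j \<inter> V j \<noteq> {}"
    by metis
  have "\<And>j. j < K \<Longrightarrow> f j \<le> N + (\<Sum>j<K. f j)"
  proof -
    fix j assume "j < K"
    then have "f j \<le> (\<Sum>j<K. f j)" by (intro member_le_sum) auto
    then show "f j \<le> N + (\<Sum>j<K. f j)" by linarith
  qed
  then show ?thesis using f by (intro exI[of _ "N + (\<Sum>j<K. f j)"]) auto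
qed


context Metric_space
begin

lemma step_exists:
  fixes K N :: nat and \<epsilon> :: real
  assumes cont: "continuous_map mtopology mtopology T"
    and tq: "top_quasi_rigid_wrt mtopology T n"
    and V: "\<And>j. j < K \<Longrightarrow> openin mtopology (V j) \<and> V j \<noteq> {}" and eps: "\<epsilon> > 0"
  shows "\<exists>c' r' i. i > (N::nat) \<and> (\<forall>j<K. c' j \<in> M \<and> 0 < r' j \<and> r' j \<le> \<epsilon> \<and>
            mcball (c' j) (r' j) \<subseteq> V j \<and> (\<forall>x\<in>mcball (c' j) (r' j). (T^^n i) x \<in> V j))"
proof -
  have "\<exists>i\<ge>Suc N. \<forall>j<K. (T ^^ n i) ` V j \<inter> V j \<noteq> {}"
    by (rule tqr_finite[OF tq]) (rule V)
  then obtain i where i: "i \<ge> Suc N" "\<forall>j<K. (T ^^ n i) ` V j \<inter> V j \<noteq> {}"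
    by blast
  have ex: "\<exists>p. j < K \<longrightarrow> (fst p \<in> M \<and> 0 < snd p \<and> snd p \<le> \<epsilon> \<and>
            mcball (fst p) (snd p) \<subseteq> V j \<and> (\<forall>x\<in>mcball (fst p) (snd p). (T^^n i) x \<in> V j))" for j
  proof (cases "j < K")
    case True
    then obtain y where y: "y \<in> V j" "(T^^n i) y \<in> V j" using i(2) by blast
    define W where "W = V j \<inter> {x \<in> topspace mtopology. (T^^n i) x \<in> V j}"
    have "openin mtopology W" unfolding W_def
      apply (rule openin_Int)
      using V[OF True] apply blast
      using openin_continuous_map_preimage[OF continuous_map_funpow[OF cont] conjunct1[OF V[OF True]]] .
    moreover have "y \<in> M" using y(1) V[OF True] openin_subset by (metis subsetD topspace_mtopology)
    moreover have "y \<in> W" using y calculation(2) unfolding W_def by simp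
    ultimately obtain r where r: "r > 0" "mball y r \<subseteq> W" unfolding openin_mtopology by blast
    have yM: "y \<in> M" by fact
    have "mcball y (min (r/2) \<epsilon>) \<subseteq> mball y r"
      using r by (intro mcball_subset_mball_concentric) auto
    then have "mcball y (min (r/2) \<epsilon>) \<subseteq> W" using r by blast
    then have "mcball y (min (r/2) \<epsilon>) \<subseteq> V j" "\<forall>x\<in>mcball y (min (r/2) \<epsilon>). (T^^n i) x \<in> V j"
      unfolding W_def by blast+
    moreover have "0 < min (r/2) \<epsilon>" "min (r/2) \<epsilon> \<le> \<epsilon>" using r eps by auto
    ultimately show ?thesis using yM
      by (intro exI[of _ "(y, min (r/2) \<epsilon>)"]) simp
  qed simp
  obtain f where f: "\<forall>j. j < K \<longrightarrow> (fst (f j) \<in> M \<and> 0 < snd (f j) \<and> snd (f j) \<le> \<epsilon> \<and>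
            mcball (fst (f j)) (snd (f j)) \<subseteq> V j \<and> (\<forall>x\<in>mcball (fst (f j)) (snd (f j)). (T^^n i) x \<in> V j))"
    using choice[OF allI[where P="\<lambda>j. \<exists>p. j < K \<longrightarrow> (fst p \<in> M \<and> 0 < snd p \<and> snd p \<le> \<epsilon> \<and>
            mcball (fst p) (snd p) \<subseteq> V j \<and> (\<forall>x\<in>mcball (fst p) (snd p). (T^^n i) x \<in> V j))", OF ex]]
    by (elim exE) blast
  have "N < i" using i(1) by simp
  show ?thesis
    by (rule exI[of _ "\<lambda>j. fst (f j)"], rule exI[of _ "\<lambda>j. snd (f j)"], rule exI[of _ i],
        rule conjI[OF \<open>N < i\<close> f])
qed

lemma core:
  fixes T :: "'a \<Rightarrow> 'a" and n :: "nat \<Rightarrow> nat" and U :: "nat \<Rightarrow> 'a set"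
  assumes comp: "mcomplete"
    and cont: "continuous_map mtopology mtopology T"
    and tq: "top_quasi_rigid_wrt mtopology T n"
    and U: "\<And>j. openin mtopology (U j) \<and> U j \<noteq> {}"
  shows "\<exists>i x. strict_mono i \<and> (\<forall>j. x j \<in> U j \<and>
            limitin mtopology (\<lambda>k. (T^^n (i k)) (x j)) (x j) sequentially)"
proof -
  define fresh where "fresh k = (SOME p. fst p \<in> M \<and> 0 < snd p \<and> mball (fst p) (snd p) \<subseteq> U k)" for k
  have fresh: "fst (fresh k) \<in> M \<and> 0 < snd (fresh k) \<and> mball (fst (fresh k)) (snd (fresh k)) \<subseteq> U k" for k
  proof -
    obtain z where z: "z \<in> U k" using U by blast
    then have zM: "z \<in> M" using U openin_subset by (metis subsetD topspace_mtopology)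
    obtain r where "r > 0" "mball z r \<subseteq> U k" using U z unfolding openin_mtopology by blast
    then have "\<exists>p. fst p \<in> M \<and> 0 < snd p \<and> mball (fst p) (snd p) \<subseteq> U k"
      using zM by (intro exI[of _ "(z,r)"]) simp
    then show ?thesis unfolding fresh_def by (rule someI_ex)
  qed
  define Vf where "Vf c r k j = (if j < k then mball (c j) (r j) else mball (fst (fresh k)) (snd (fresh k)))"
    for c :: "nat \<Rightarrow> 'a" and r :: "nat \<Rightarrow> real" and k j :: nat
  define Good where "Good k c r N c' r' i \<longleftrightarrow> i > N \<and> (\<forall>j<Suc k. c' j \<in> M \<and> 0 < r' j \<and> r' j \<le> 1 / real (Suc k) \<and>
      mcball (c' j) (r' j) \<subseteq> Vf c r k j \<and> (\<forall>x\<in>mcball (c' j) (r' j). (T^^n i) x \<in> Vf c r k j))"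
    for k :: nat and c :: "nat \<Rightarrow> 'a" and r :: "nat \<Rightarrow> real" and N :: nat
       and c' :: "nat \<Rightarrow> 'a" and r' :: "nat \<Rightarrow> real" and i :: nat
  define step where "step k s = (SOME (c',r',i). Good k (fst s) (fst (snd s)) (snd (snd s)) c' r' i)"
    for k :: nat and s :: "(nat \<Rightarrow> 'a) \<times> (nat \<Rightarrow> real) \<times> nat"
  define S where "S = rec_nat (undefined, undefined, 0) step"
  define C where "C k = fst (S k)" for k
  define R where "R k = fst (snd (S k))" for k
  define I where "I k = snd (snd (S k))" for k
  have S_Suc: "S (Suc k) = step k (S k)" for k by (simp add: S_def)
  have G0: "Good k (C k) (R k) (I k) (C (Suc k)) (R (Suc k)) (I (Suc k))"
    if inv: "\<forall>j<k. C k j \<in> M \<and> 0 < R k j" for k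
  proof -
    have VV: "openin mtopology (Vf (C k) (R k) k j) \<and> Vf (C k) (R k) k j \<noteq> {}" if "j < Suc k" for j
    proof (cases "j < k")
      case True
      then show ?thesis using inv unfolding Vf_def by auto
    next
      case False
      then show ?thesis using fresh[of k] unfolding Vf_def by auto
    qed
    have pos: "(0::real) < 1 / real (Suc k)" by simp
    from step_exists[where K="Suc k" and V="Vf (C k) (R k) k" and N="I k", OF cont tq VV pos]
    obtain c' r' i where "Good k (C k) (R k) (I k) c' r' i"
      unfolding Good_def by blast
    then have "\<exists>p. (\<lambda>(c',r',i). Good k (C k) (R k) (I k) c' r' i) p" by auto
    then have "(\<lambda>(c',r',i). Good k (C k) (R k) (I k) c' r' i) (step k (S k))"
      unfolding step_def C_def R_def I_def by (rule someI_ex)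
    then show ?thesis unfolding S_Suc C_def R_def I_def by (simp add: split_beta)
  qed
  have inv: "\<forall>j<k. C k j \<in> M \<and> 0 < R k j" for k
  proof (induction k)
    case 0 then show ?case by simp
  next
    case (Suc k)
    from G0[OF Suc] show ?case unfolding Good_def by blast
  qed
  have G: "Good k (C k) (R k) (I k) (C (Suc k)) (R (Suc k)) (I (Suc k))" for k
    using G0 inv by blast
  define i where "i k = I (Suc k)" for k
  have Gm: "C (Suc k) j \<in> M \<and> 0 < R (Suc k) j \<and> R (Suc k) j \<le> 1 / real (Suc k) \<and>
      mcball (C (Suc k) j) (R (Suc k) j) \<subseteq> Vf (C k) (R k) k j \<and>
      (\<forall>x\<in>mcball (C (Suc k) j) (R (Suc k) j). (T^^n (i k)) x \<in> Vf (C k) (R k) k j)"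
    if "j < Suc k" for j k
    using G[of k] that unfolding Good_def i_def by blast
  have mono: "strict_mono i"
    unfolding strict_mono_Suc_iff i_def using G unfolding Good_def by blast
  have exx: "\<exists>z. \<forall>t. z \<in> mcball (C (Suc (j+t)) j) (R (Suc (j+t)) j)" for j
  proof -
    define D where "D t = mcball (C (Suc (j+t)) j) (R (Suc (j+t)) j)" for t
    have H: "(\<forall>n. closedin mtopology (D n)) \<and> (\<forall>n. D n \<noteq> {}) \<and> decseq D \<and>
          (\<forall>\<epsilon>>0. \<exists>n a. D n \<subseteq> mcball a \<epsilon>) \<longrightarrow> \<Inter> (range D) \<noteq> {}"
      using comp unfolding mcomplete_nest by blast
    have "\<Inter> (range D) \<noteq> {}"
    proof (rule H[rule_format], intro conjI allI impI)
      fix t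
      show "closedin mtopology (D t)" unfolding D_def by simp
      have "C (Suc (j+t)) j \<in> M" "0 < R (Suc (j+t)) j" using Gm[of j "j+t"] by auto
      then have "C (Suc (j+t)) j \<in> D t" unfolding D_def by simp
      then show "D t \<noteq> {}" by blast
    next
      show "decseq D"
      proof (rule decseq_SucI)
        fix t
        have "D (Suc t) \<subseteq> Vf (C (Suc (j+t))) (R (Suc (j+t))) (Suc (j+t)) j"
          using Gm[of j "Suc (j+t)"] unfolding D_def by simp
        also have "\<dots> = mball (C (Suc (j+t)) j) (R (Suc (j+t)) j)" unfolding Vf_def by simp
        also have "\<dots> \<subseteq> D t" unfolding D_def by (rule mball_subset_mcball)
        finally show "D (Suc t) \<subseteq> D t" .
      qed
    next
      fix \<epsilon> :: real assume "\<epsilon> > 0"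
      then obtain N where N: "N > 0" "inverse (real N) < \<epsilon>" using ex_inverse_of_nat_less by blast
      have "R (Suc (j+N)) j \<le> 1 / real (Suc (j+N))" using Gm[of j "j+N"] by simp
      also have "\<dots> \<le> inverse (real N)" using N(1) by (simp add: field_simps)
      finally have "R (Suc (j+N)) j \<le> \<epsilon>" using N(2) by simp
      then have "D N \<subseteq> mcball (C (Suc (j+N)) j) \<epsilon>" unfolding D_def by (rule mcball_subset_concentric)
      then show "\<exists>n a. D n \<subseteq> mcball a \<epsilon>" by blast
    qed
    then show ?thesis unfolding D_def by blast
  qed
  define x where "x j = (SOME z. \<forall>t. z \<in> mcball (C (Suc (j+t)) j) (R (Suc (j+t)) j))" for j
  have xin0: "x j \<in> mcball (C (Suc (j+t)) j) (R (Suc (j+t)) j)" for j t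
    using someI_ex[OF exx[of j]] unfolding x_def by blast
  have xin: "x j \<in> mcball (C k j) (R k j)" if "j < k" for j k
  proof -
    have "Suc (j + (k - Suc j)) = k" using that by simp
    then show ?thesis using xin0[of j "k - Suc j"] by simp
  qed
  have xM: "x j \<in> M" for j using xin[of j "Suc j"] by simp
  have xU: "x j \<in> U j" for j
  proof -
    have "x j \<in> Vf (C j) (R j) j j" using xin0[of j 0] Gm[of j j] by auto
    then show ?thesis using fresh[of j] unfolding Vf_def by auto
  qed
  have lim: "limitin mtopology (\<lambda>k. (T^^n (i k)) (x j)) (x j) sequentially" for j
    unfolding limitin_metric
  proof (intro conjI xM allI impI)
    fix \<epsilon> :: real assume "\<epsilon> > 0"
    then obtain N where N: "N > 0" "inverse (real N) < \<epsilon>/2" using ex_inverse_of_nat_less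
      by (metis half_gt_zero)
    show "\<forall>\<^sub>F k in sequentially. (T ^^ n (i k)) (x j) \<in> M \<and> d ((T ^^ n (i k)) (x j)) (x j) < \<epsilon>"
      unfolding eventually_sequentially
    proof (intro exI[of _ "j+N"] allI impI)
      fix k assume k: "j + N \<le> k"
      then have jk: "j < k" using N(1) by simp
      have a: "x j \<in> mcball (C (Suc k) j) (R (Suc k) j)" using xin[of j "Suc k"] jk by simp
      have "(T^^n (i k)) (x j) \<in> Vf (C k) (R k) k j" using Gm[of j k] a jk by auto
      then have b: "(T^^n (i k)) (x j) \<in> mball (C k j) (R k j)" using jk unfolding Vf_def by simp
      have c: "x j \<in> mcball (C k j) (R k j)" using xin[OF jk] .
      have kk: "Suc (k - 1) = k" using jk by simp
      have "R (Suc (k-1)) j \<le> 1 / real (Suc (k-1))" using Gm[of j "k-1"] jk by simp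
      then have r: "R k j \<le> 1 / real k" unfolding kk .
      have "1 / real k \<le> inverse (real N)" using N(1) k by (simp add: field_simps)
      then have r2: "R k j < \<epsilon>/2" using r N(2) by linarith
      have cM: "C k j \<in> M" and TM: "(T^^n (i k)) (x j) \<in> M" using b by auto
      have "d ((T ^^ n (i k)) (x j)) (x j) \<le> d ((T ^^ n (i k)) (x j)) (C k j) + d (C k j) (x j)"
        using triangle[OF TM cM xM] .
      also have "\<dots> < \<epsilon>" using b c r2 commute[of "C k j" "(T ^^ n (i k)) (x j)"] by simp
      finally show "(T ^^ n (i k)) (x j) \<in> M \<and> d ((T ^^ n (i k)) (x j)) (x j) < \<epsilon>" using TM by simp
    qed
  qed
  show ?thesis using mono xU lim by blast
qed

end

theorem mainTheorem2:
  fixes X :: "'a topology" and T :: "'a \<Rightarrow> 'a"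
  assumes "completely_metrizable_space X" and "separable_space X"
    and "continuous_map X X T"
  shows "quasi_rigid X T \<longleftrightarrow> top_quasi_rigid X T"
proof
  assume "quasi_rigid X T"
  then show "top_quasi_rigid X T"
    unfolding quasi_rigid_def top_quasi_rigid_def using qr_imp_tqr by blast
next
  assume "top_quasi_rigid X T"
  then obtain n where n: "strict_mono n" "\<forall>k. 0 < n k" "top_quasi_rigid_wrt X T n"
    unfolding top_quasi_rigid_def by blast
  obtain M d where Md: "Metric_space M d" "Metric_space.mcomplete M d" "X = Metric_space.mtopology M d"
    using assms(1) unfolding completely_metrizable_space_def by blast
  interpret Metric_space M d by (rule Md(1))
  show "quasi_rigid X T"
  proof (cases "M = {}")
    case True
    have "quasi_rigid_wrt X T n" unfolding quasi_rigid_wrt_def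
      using True Md(3) topspace_mtopology by (intro exI[of _ "{}"]) simp
    then show ?thesis unfolding quasi_rigid_def using n by blast
  next
    case False
    obtain D where D: "countable D" "D \<subseteq> M" "mtopology closure_of D = M"
      using assms(2) unfolding separable_space_def Md(3) by auto
    have Dne: "D \<noteq> {}" using D(3) False by auto
    define U where "U j = mball (from_nat_into D (fst (prod_decode j))) (1 / real (Suc (snd (prod_decode j))))" for j
    have U: "openin mtopology (U j) \<and> U j \<noteq> {}" for j
    proof -
      have "from_nat_into D (fst (prod_decode j)) \<in> M" using from_nat_into[OF Dne] D(2) by blast
      moreover have "0 < 1 / real (Suc (snd (prod_decode j)))" by simp
      ultimately have "from_nat_into D (fst (prod_decode j)) \<in> U j" unfolding U_def
        using centre_in_mball_iff by blast
      then show ?thesis unfolding U_def by blast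
    qed
    have cont: "continuous_map mtopology mtopology T" using assms(3) Md(3) by simp
    obtain i x where ix: "strict_mono i" "\<And>j. x j \<in> U j"
       "\<And>j. limitin mtopology (\<lambda>k. (T^^n (i k)) (x j)) (x j) sequentially"
      using core[where U=U, OF Md(2) cont n(3)[unfolded Md(3)] U] by blast
    have dense: "mtopology closure_of range x = M"
      unfolding dense_intersects_open[where X=mtopology, simplified]
    proof (intro allI impI)
      fix V assume V: "openin mtopology V \<and> V \<noteq> {}"
      then obtain z where z: "z \<in> V" by blast
      then have zM: "z \<in> M" using V openin_subset by (metis subsetD topspace_mtopology)
      obtain r where r: "r > 0" "mball z r \<subseteq> V" using V z unfolding openin_mtopology by blast
      obtain q where q: "inverse (real (Suc q)) < r/2"
        using reals_Archimedean r(1) by (metis half_gt_zero)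
      have "z \<in> mball z (r/2)" using zM r(1) by simp
      then have "D \<inter> mball z (r/2) \<noteq> {}"
        using D(3) openin_mball[of z "r/2"] unfolding dense_intersects_open[where X=mtopology, simplified]
        by blast
      then obtain e where e: "e \<in> D" "d z e < r/2" by auto
      obtain a where a: "from_nat_into D a = e" using from_nat_into_surj[OF D(1) e(1)] by blast
      define j where "j = prod_encode (a, q)"
      have "x j \<in> mball e (1 / real (Suc q))" using ix(2)[of j] a unfolding U_def j_def by simp
      then have xj: "x j \<in> M" "d e (x j) < 1 / real (Suc q)" by auto
      have eM: "e \<in> M" using e(1) D(2) by blast
      have "d z (x j) \<le> d z e + d e (x j)" using triangle[OF zM eM xj(1)] .
      also have "\<dots> < r" using e(2) xj(2) q by (simp add: inverse_eq_divide)
      finally have "x j \<in> mball z r" using zM xj(1) by simp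
      then show "range x \<inter> V \<noteq> {}" using r(2) by blast
    qed
    have "quasi_rigid_wrt X T (n \<circ> i)" unfolding quasi_rigid_wrt_def Md(3)
    proof (intro exI[of _ "range x"] conjI)
      show "range x \<subseteq> topspace mtopology" using ix(2) U openin_subset by (metis image_subsetI subsetD)
      show "mtopology closure_of range x = topspace mtopology" using dense by simp
      show "\<forall>y\<in>range x. limitin mtopology (\<lambda>k. (T ^^ (n \<circ> i) k) y) y sequentially"
        using ix(3) by auto
    qed
    moreover have "strict_mono (n \<circ> i)" using n(1) ix(1) by (rule strict_mono_o)
    moreover have "\<forall>k. 0 < (n \<circ> i) k" using n(2) by simp
    ultimately show ?thesis unfolding quasi_rigid_def by blast
  qed
qed

end
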